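(* Let $\boldsymbol Z\sim N(0,\boldsymbol I_d)$ and let $W$ be a discrete random variable (jointly distributed with $\boldsymbol Z$) with $\mathbb P(W=w)<1/2$ for every $w$. Then $$\lambda_{\min}\big(\mathrm{Cov}[\mathbb E(\boldsymbol Z\mid W)]\big)\le 37\,d^{-1}\,\mathrm{Ent}(W).$$ In particular, if the support of $W$ has $K$ elements, then $\lambda_{\min}(\mathrm{Cov}[\mathbb E(\boldsymbol Z\mid W)])\le 37\,d^{-1}\log K$.
   Context: $\mathrm{Ent}(W)=\sum_w\mathbb P(W=w)\log\frac1{\mathbb P(W=w)}$. *)

theory Defs
  imports "HOL-Probability.Probability"
begin

definition lambda_min :: "real^'n^'n \<Rightarrow> real" where
  "lambda_min A = Min {l. \<exists>v::real^'n. v \<noteq> 0 \<and> A *v v = l *\<^sub>R v}"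

definition sigma_of :: "'a measure \<Rightarrow> ('a \<Rightarrow> 'w) \<Rightarrow> 'a measure" where
  "sigma_of M W = vimage_algebra (space M) W (count_space UNIV)"

definition cond_exp_vec :: "'a measure \<Rightarrow> ('a \<Rightarrow> 'w) \<Rightarrow> ('a \<Rightarrow> real^'d) \<Rightarrow> 'a \<Rightarrow> real^'d" where
  "cond_exp_vec M W Z = (\<lambda>\<omega>. \<chi> i. real_cond_exp M (sigma_of M W) (\<lambda>x. Z x $ i) \<omega>)"

definition cov_matrix :: "'a measure \<Rightarrow> ('a \<Rightarrow> real^'d) \<Rightarrow> real^'d^'d" where
  "cov_matrix M Y = (\<chi> i j. \<integral>\<omega>. (Y \<omega> $ i - (\<integral>x. Y x $ i \<partial>M)) * (Y \<omega> $ j - (\<integral>x. Y x $ j \<partial>M)) \<partial>M)"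

definition discrete_entropy :: "'a measure \<Rightarrow> ('a \<Rightarrow> 'w) \<Rightarrow> ennreal" where
  "discrete_entropy M W = (\<integral>\<^sup>+ w. ennreal (measure M {\<omega>\<in>space M. W \<omega> = w} *
       ln (1 / measure M {\<omega>\<in>space M. W \<omega> = w})) \<partial>count_space UNIV)"

definition support_rv :: "'a measure \<Rightarrow> ('a \<Rightarrow> 'w) \<Rightarrow> 'w set" where
  "support_rv M W = {w. measure M {\<omega>\<in>space M. W \<omega> = w} > 0}"

end

theory Submission
  imports Defs
begin
lemma quad_zero:
  fixes b c t :: real assumes c0: "c \<ge> 0" and f: "2 * t * b + t^2 * c \<ge> 0" and t_def: "t = - b / (c+1)"
  shows "b = 0"
proof -
  have tc: "t * (c+1) = - b" using c0 by (simp add: t_def)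
  have "(2 * t * b + t^2 * c) * (c+1)^2 = 2 * b * (t * (c+1)) * (c+1) + c * (t*(c+1))^2"
    by (simp add: power2_eq_square algebra_simps)
  also have "\<dots> = - (b^2) * (c+2)" unfolding tc by (simp add: power2_eq_square algebra_simps)
  finally have e: "(2 * t * b + t^2 * c) * (c+1)^2 = - (b^2) * (c+2)" .
  have "- (b^2) * (c+2) \<ge> 0" unfolding e[symmetric] using f by simp
  then have "b^2 \<le> 0" using c0 by (simp add: mult_le_0_iff)
  then show ?thesis by simp
qed

lemma sym_quad:
  fixes C :: "real^'n^'n"
  assumes "\<And>i j. C$i$j = C$j$i"
  shows "x \<bullet> (C *v y) = y \<bullet> (C *v x)"
proof -
  have "x \<bullet> (C *v y) = (\<Sum>i\<in>UNIV. \<Sum>j\<in>UNIV. x$i * C$i$j * y$j)"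
    by (simp add: inner_vec_def matrix_vector_mult_def sum_distrib_left mult.assoc)
  also have "\<dots> = (\<Sum>j\<in>UNIV. \<Sum>i\<in>UNIV. x$i * C$i$j * y$j)" by (rule sum.swap)
  also have "\<dots> = y \<bullet> (C *v x)"
    by (simp add: inner_vec_def matrix_vector_mult_def sum_distrib_left assms mult_ac)
  finally show ?thesis .
qed

lemma quad_lin:
  fixes C :: "real^'n^'n"
  assumes "\<And>i j. C$i$j = C$j$i"
  shows "(v + t *\<^sub>R w) \<bullet> (C *v (v + t *\<^sub>R w)) =
    v \<bullet> (C *v v) + 2 * t * (w \<bullet> (C *v v)) + t^2 * (w \<bullet> (C *v w))"
proof -
  have "C *v (v + t *\<^sub>R w) = C *v v + t *\<^sub>R (C *v w)"
    by (simp add: matrix_vector_right_distrib matrix_vector_mult_scaleR)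
  then show ?thesis using sym_quad[OF assms, of v w]
    by (simp add: inner_add_left inner_add_right power2_eq_square algebra_simps)
qed

lemma lambda_min_le_diag:
  fixes C :: "real^'n^'n"
  assumes sym: "\<And>i j. C$i$j = C$j$i"
  shows "lambda_min C \<le> C$k$k"
proof -
  define Q where "Q = (\<lambda>v. v \<bullet> (C *v v))"
  have cont: "continuous_on (sphere 0 1) Q" unfolding Q_def
    by (intro continuous_intros matrix_vector_mult_linear_continuous_on[THEN continuous_on_subset]) auto
  have ne: "sphere (0::real^'n) 1 \<noteq> {}" by (simp)
  obtain v0 where v0: "v0 \<in> sphere 0 1" and min: "\<And>v. v \<in> sphere 0 1 \<Longrightarrow> Q v0 \<le> Q v"
    using continuous_attains_inf[OF compact_sphere ne cont] by blast
  define \<mu> where "\<mu> = Q v0"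
  have nv0: "norm v0 = 1" using v0 by simp
  have Qge: "Q x \<ge> \<mu> * (x \<bullet> x)" for x
  proof (cases "x = 0")
    case True then show ?thesis by (simp add: Q_def)
  next
    case False
    define u where "u = (1 / norm x) *\<^sub>R x"
    have "u \<in> sphere 0 1" using False by (simp add: u_def)
    then have "\<mu> \<le> Q u" using min \<mu>_def by blast
    also have "Q u = Q x / (norm x)^2"
      by (simp add: Q_def u_def matrix_vector_mult_scaleR power2_eq_square)
    finally have "\<mu> * (norm x)^2 \<le> Q x" using False by (simp add: field_simps)
    then show ?thesis by (simp add: power2_norm_eq_inner)
  qed
  have eig: "C *v v0 = \<mu> *\<^sub>R v0"
  proof -
    define r where "r = C *v v0 - \<mu> *\<^sub>R v0"
    define b where "b = r \<bullet> (C *v v0) - \<mu> * (r \<bullet> v0)"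
    define c where "c = Q r - \<mu> * (r \<bullet> r)"
    have c0: "c \<ge> 0" using Qge[of r] by (simp add: c_def)
    have v0v0: "v0 \<bullet> v0 = 1" using nv0 by (simp add: norm_eq_1)
    have f: "2 * t * b + t^2 * c \<ge> 0" for t
    proof -
      have n: "(v0 + t *\<^sub>R r) \<bullet> (v0 + t *\<^sub>R r) = v0 \<bullet> v0 + 2 * t * (r \<bullet> v0) + t^2 * (r \<bullet> r)"
        by (simp add: inner_add_left inner_add_right inner_commute[of v0 r] power2_eq_square algebra_simps)
      have "Q (v0 + t *\<^sub>R r) \<ge> \<mu> * ((v0 + t *\<^sub>R r) \<bullet> (v0 + t *\<^sub>R r))" by (rule Qge)
      moreover have "Q (v0 + t *\<^sub>R r) - \<mu> * ((v0 + t *\<^sub>R r) \<bullet> (v0 + t *\<^sub>R r)) = 2 * t * b + t^2 * c"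
        unfolding n v0v0 Q_def quad_lin[OF sym] b_def c_def \<mu>_def by (simp add: Q_def algebra_simps)
      ultimately show ?thesis by linarith
    qed
    have "b = 0" by (rule quad_zero[OF c0 f refl])
    then have "r \<bullet> r = 0" unfolding b_def r_def by (simp add: inner_diff_left inner_diff_right)
    then show ?thesis by (simp add: r_def)
  qed
  define E where "E = {l. \<exists>v::real^'n. v \<noteq> 0 \<and> C *v v = l *\<^sub>R v}"
  have muE: "\<mu> \<in> E" unfolding E_def using eig nv0 by (intro CollectI exI[of _ v0]) auto
  have finE: "finite E"
  proof -
    define g where "g = (\<lambda>l. SOME v. v \<noteq> 0 \<and> C *v v = l *\<^sub>R v)"
    have g: "g l \<noteq> 0 \<and> C *v g l = l *\<^sub>R g l" if "l \<in> E" for l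
      using that unfolding E_def g_def by (metis (mono_tags, lifting) mem_Collect_eq someI_ex)
    have orth: "g l \<bullet> g m = 0" if "l \<in> E" "m \<in> E" "l \<noteq> m" for l m
    proof -
      have "l * (g l \<bullet> g m) = g m \<bullet> (C *v g l)" using g[OF that(1)] by (simp add: inner_commute)
      also have "\<dots> = g l \<bullet> (C *v g m)" by (rule sym_quad[OF sym])
      also have "\<dots> = m * (g l \<bullet> g m)" using g[OF that(2)] by simp
      finally show ?thesis using that(3) by simp
    qed
    have inj: "inj_on g E"
    proof (rule inj_onI)
      fix l m assume "l \<in> E" "m \<in> E" "g l = g m"
      then show "l = m" using orth g by (metis inner_eq_zero_iff)
    qed
    have "independent (g ` E)"
      apply (rule pairwise_orthogonal_independent)
      using orth g unfolding pairwise_def orthogonal_def by auto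
    then have "finite (g ` E)" by (rule finiteI_independent)
    then show ?thesis using inj finite_imageD by blast
  qed
  have "lambda_min C \<le> \<mu>" unfolding lambda_min_def E_def[symmetric] using finE muE by simp
  also have "\<mu> \<le> Q (axis k 1)" unfolding \<mu>_def by (rule min) simp
  also have "Q (axis k 1) = C$k$k"
  proof -
    have "Q (axis k 1) = (C *v axis k 1) $ k" by (simp add: Q_def inner_axis')
    also have "\<dots> = (\<Sum>j\<in>UNIV. C$k$j * (if j = k then 1 else 0))"
      by (simp add: matrix_vector_mult_def axis_def)
    also have "\<dots> = (\<Sum>j\<in>UNIV. if j = k then C$k$j else 0)"
      by (rule sum.cong) auto
    also have "\<dots> = C$k$k" by simp
    finally show ?thesis .
  qed
  finally show ?thesis .
qed

lemma gauss_shift: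
  fixes a x :: "real^'d"
  shows "(\<Prod>i\<in>UNIV. std_normal_density (x $ i)) * exp (a \<bullet> x - a \<bullet> a / 2)
       = (\<Prod>i\<in>UNIV. std_normal_density ((x - a) $ i))"
proof -
  have "exp (a \<bullet> x - a \<bullet> a / 2) = (\<Prod>i\<in>UNIV. exp (a$i * x$i - a$i * a$i / 2))"
    by (simp add: inner_vec_def exp_sum[symmetric] sum_subtractf sum_divide_distrib)
  then have "(\<Prod>i\<in>UNIV. std_normal_density (x $ i)) * exp (a \<bullet> x - a \<bullet> a / 2)
     = (\<Prod>i\<in>UNIV. std_normal_density (x $ i) * exp (a$i * x$i - a$i * a$i / 2))"
    by (simp add: prod.distrib)
  also have "\<dots> = (\<Prod>i\<in>UNIV. std_normal_density ((x - a) $ i))"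
  proof (rule prod.cong[OF refl])
    fix i
    show "std_normal_density (x $ i) * exp (a$i * x$i - a$i * a$i / 2) = std_normal_density ((x - a) $ i)"
      by (simp add: normal_density_def exp_add[symmetric] power2_eq_square algebra_simps diff_divide_distrib)
  qed
  finally show ?thesis .
qed

lemma gauss_mgf:
  fixes Z :: "'a \<Rightarrow> real^'d" and a :: "real^'d"
  assumes P: "prob_space M"
    and D: "distributed M lborel Z (\<lambda>x. ennreal (\<Prod>i\<in>UNIV. std_normal_density (x $ i)))"
  shows "(\<integral>\<^sup>+ \<omega>. ennreal (exp (a \<bullet> Z \<omega> - a \<bullet> a / 2)) \<partial>M) = 1"
proof -
  interpret prob_space M by (rule P)
  define g where "g = (\<lambda>x::real^'d. (\<Prod>i\<in>UNIV. std_normal_density (x $ i)))"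
  have gm[measurable]: "g \<in> borel_measurable borel" unfolding g_def by measurable
  have g0: "g x \<ge> 0" for x unfolding g_def by (simp add: prod_nonneg)
  have "(\<integral>\<^sup>+ \<omega>. ennreal (exp (a \<bullet> Z \<omega> - a \<bullet> a / 2)) \<partial>M)
      = (\<integral>\<^sup>+ x. ennreal (g x) * ennreal (exp (a \<bullet> x - a \<bullet> a / 2)) \<partial>lborel)"
    using distributed_nn_integral[OF D, of "\<lambda>x. ennreal (exp (a \<bullet> x - a \<bullet> a / 2))"]
    by (simp add: g_def)
  also have "\<dots> = (\<integral>\<^sup>+ x. ennreal (g (x - a)) \<partial>lborel)"
    using gauss_shift[of _ a] g0 by (simp add: g_def ennreal_mult[symmetric])
  also have "\<dots> = (\<integral>\<^sup>+ x. ennreal (g x) \<partial>distr lborel borel ((+) (-a)))"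
    by (simp add: nn_integral_distr)
  also have "\<dots> = (\<integral>\<^sup>+ x. ennreal (g x) \<partial>lborel)"
    by (simp add: lborel_distr_plus)
  also have "\<dots> = (\<integral>\<^sup>+ x. ennreal (g x) * 1 \<partial>lborel)" by simp
  also have "\<dots> = (\<integral>\<^sup>+ \<omega>. 1 \<partial>M)"
    using distributed_nn_integral[OF D, of "\<lambda>x. 1"] by (simp add: g_def)
  also have "\<dots> = 1" by (simp add: emeasure_space_1)
  finally show ?thesis .
qed

locale gsetup = prob_space M for M :: "'a measure" +
  fixes Z :: "'a \<Rightarrow> real^'d" and W :: "'a \<Rightarrow> 'w"
  assumes D: "distributed M lborel Z (\<lambda>x. ennreal (\<Prod>i\<in>UNIV. std_normal_density (x $ i)))"
    and Wm[measurable]: "W \<in> measurable M (count_space UNIV)"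
    and cW: "countable (W ` space M)"
begin

abbreviation "F \<equiv> sigma_of M W"

lemma Zm[measurable]: "Z \<in> borel_measurable M"
  using distributed_measurable[OF D] by simp

lemma vecnth_meas[measurable]: "(\<lambda>x::real^'d. x $ i) \<in> borel_measurable borel"
  by (intro borel_measurable_continuous_onI continuous_intros)

lemma Zim[measurable]: "(\<lambda>x. Z x $ i) \<in> borel_measurable M"
  using measurable_compose[OF Zm vecnth_meas] by simp

lemma subalg: "subalgebra M F"
proof -
  have "sets F = {W -` A \<inter> space M | A. A \<in> sets (count_space UNIV)}"
    unfolding sigma_of_def by (rule sets_vimage_algebra2) auto
  moreover have "W -` A \<inter> space M \<in> sets M" for A
    using measurable_sets[OF Wm, of A] by simp
  ultimately show ?thesis unfolding subalgebra_def sigma_of_def by auto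
qed

lemma sfs: "sigma_finite_subalgebra M F"
  apply (rule finite_measure_subalgebra_is_sigma_finite)
  unfolding finite_measure_subalgebra_def finite_measure_subalgebra_axioms_def
  using subalg finite_measure_axioms by auto

lemma exp_int: "integrable M (\<lambda>x. exp (c * Z x $ i))"
proof (rule integrableI_nonneg)
  show "(\<lambda>x. exp (c * Z x $ i)) \<in> borel_measurable M" by measurable
  show "AE x in M. 0 \<le> exp (c * Z x $ i)" by simp
  define a :: "real^'d" where "a = c *\<^sub>R axis i 1"
  have aZ: "a \<bullet> Z x = c * Z x $ i" for x by (simp add: a_def inner_axis')
  have "(\<integral>\<^sup>+ x. ennreal (exp (c * Z x $ i)) \<partial>M)
     = (\<integral>\<^sup>+ x. ennreal (exp (a \<bullet> a / 2)) * ennreal (exp (a \<bullet> Z x - a \<bullet> a / 2)) \<partial>M)"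
    by (rule nn_integral_cong) (simp add: aZ ennreal_mult[symmetric] exp_add[symmetric])
  also have "\<dots> = ennreal (exp (a \<bullet> a / 2)) * (\<integral>\<^sup>+ x. ennreal (exp (a \<bullet> Z x - a \<bullet> a / 2)) \<partial>M)"
    by (rule nn_integral_cmult) measurable
  also have "\<dots> = ennreal (exp (a \<bullet> a / 2))"
    using gauss_mgf[OF prob_space_axioms D, of a] by simp
  finally show "(\<integral>\<^sup>+ x. ennreal (exp (c * Z x $ i)) \<partial>M) < \<infinity>" by simp
qed

lemma Zsq_int: "integrable M (\<lambda>x. (Z x $ i)^2)"
proof (rule Bochner_Integration.integrable_bound)
  show "integrable M (\<lambda>x. 2 * (exp (1 * Z x $ i) + exp ((-1) * Z x $ i)))"
    using exp_int[of 1 i] exp_int[of "-1" i] by simp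
  show "(\<lambda>x. (Z x $ i)^2) \<in> borel_measurable M" by measurable
  have "t^2 \<le> 2 * (exp t + exp (-t))" for t :: real
  proof -
    have "1 + \<bar>t\<bar> + \<bar>t\<bar>^2 / 2 \<le> exp \<bar>t\<bar>" by (rule exp_lower_Taylor_quadratic) simp
    moreover have "exp \<bar>t\<bar> \<le> exp t + exp (-t)" by (cases "t \<ge> 0") auto
    ultimately show ?thesis by simp
  qed
  then show "AE x in M. norm ((Z x $ i)^2) \<le> norm (2 * (exp (1 * Z x $ i) + exp ((-1) * Z x $ i)))"
    by (simp add: add_pos_pos)
qed

end

context gsetup begin

definition "Y i = real_cond_exp M F (\<lambda>x. Z x $ i)"

lemma Zi_int: "integrable M (\<lambda>x. Z x $ i)"
proof (rule Bochner_Integration.integrable_bound)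
  show "integrable M (\<lambda>x. 1 + (Z x $ i)^2)" using Zsq_int[of i] by simp
  show "(\<lambda>x. Z x $ i) \<in> borel_measurable M" by measurable
  have "\<bar>t\<bar> \<le> 1 + t^2" for t :: real
  proof -
    have "0 \<le> (\<bar>t\<bar> - 1)^2" by simp
    then show ?thesis by (simp add: power2_eq_square algebra_simps abs_mult_self_eq)
  qed
  then show "AE x in M. norm (Z x $ i) \<le> norm (1 + (Z x $ i)^2)" by simp
qed

lemma YmF[measurable]: "Y i \<in> borel_measurable F"
  unfolding Y_def by (rule borel_measurable_cond_exp)

lemma Ym[measurable]: "Y i \<in> borel_measurable M"
  by (rule measurable_from_subalg[OF subalg YmF])

lemma Ysq_int: "integrable M (\<lambda>x. (Y i x)^2)"
proof (rule Bochner_Integration.integrable_bound)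
  show "integrable M (real_cond_exp M F (\<lambda>x. (Z x $ i)^2))"
    by (rule sigma_finite_subalgebra.real_cond_exp_int(1)[OF sfs Zsq_int])
  show "(\<lambda>x. (Y i x)^2) \<in> borel_measurable M" by measurable
  have "AE x in M. (real_cond_exp M F (\<lambda>x. Z x $ i) x)^2 \<le> real_cond_exp M F (\<lambda>x. (Z x $ i)^2) x"
    using sigma_finite_subalgebra.real_cond_exp_jensens_inequality(2)[OF sfs Zi_int[of i],
        where I=UNIV and q=power2, OF _ _ _ convex_power2] Zsq_int[of i]
    by auto
  moreover have "AE x in M. 0 \<le> real_cond_exp M F (\<lambda>x. (Z x $ i)^2) x"
    by (rule sigma_finite_subalgebra.real_cond_exp_pos[OF sfs]) (auto intro: Zsq_int)
  ultimately show "AE x in M. norm ((Y i x)^2) \<le> norm (real_cond_exp M F (\<lambda>x. (Z x $ i)^2) x)"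
    by eventually_elim (auto simp: Y_def)
qed

lemma Y_int: "integrable M (Y i)"
  unfolding Y_def by (rule sigma_finite_subalgebra.real_cond_exp_int(1)[OF sfs Zi_int])

lemma YZ_int: "integrable M (\<lambda>x. Y i x * Z x $ i)"
proof (rule Bochner_Integration.integrable_bound)
  show "integrable M (\<lambda>x. (Y i x)^2 + (Z x $ i)^2)" using Ysq_int[of i] Zsq_int[of i] by simp
  show "(\<lambda>x. Y i x * Z x $ i) \<in> borel_measurable M" by measurable
  have "\<bar>u * v\<bar> \<le> u^2 + v^2" for u v :: real
  proof -
    have "0 \<le> (\<bar>u\<bar> - \<bar>v\<bar>)^2" by simp
    then have "2 * (\<bar>u\<bar> * \<bar>v\<bar>) \<le> u^2 + v^2" by (simp add: power2_eq_square algebra_simps abs_mult_self_eq)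
    moreover have "0 \<le> \<bar>u\<bar> * \<bar>v\<bar>" by simp
    ultimately show ?thesis unfolding abs_mult by linarith
  qed
  then show "AE x in M. norm (Y i x * Z x $ i) \<le> norm ((Y i x)^2 + (Z x $ i)^2)" by simp
qed

lemma EYY: "(\<integral>x. (Y i x)^2 \<partial>M) = (\<integral>x. Y i x * Z x $ i \<partial>M)"
  using sigma_finite_subalgebra.real_cond_exp_intg(2)[OF sfs YZ_int YmF Zim]
  by (simp add: Y_def power2_eq_square)

lemma var_le: "(\<integral>\<omega>. (Y i \<omega> - (\<integral>x. Y i x \<partial>M)) * (Y i \<omega> - (\<integral>x. Y i x \<partial>M)) \<partial>M) \<le> (\<integral>x. (Y i x)^2 \<partial>M)"
proof -
  define m where "m = (\<integral>x. Y i x \<partial>M)"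
  have "(\<integral>\<omega>. (Y i \<omega> - m) * (Y i \<omega> - m) \<partial>M) = (\<integral>\<omega>. (Y i \<omega>)^2 - 2 * m * Y i \<omega> + m^2 \<partial>M)"
    by (rule Bochner_Integration.integral_cong) (auto simp: power2_eq_square algebra_simps)
  also have "\<dots> = (\<integral>\<omega>. (Y i \<omega>)^2 \<partial>M) - 2 * m * m + m^2"
    using Ysq_int[of i] Y_int[of i] by (simp add: m_def prob_space)
  also have "\<dots> \<le> (\<integral>\<omega>. (Y i \<omega>)^2 \<partial>M)" by (simp add: power2_eq_square)
  finally show ?thesis by (simp add: m_def)
qed

end

context gsetup begin

definition "S = W ` space M"
definition "A w = {\<omega>\<in>space M. W \<omega> = w}"
definition "p w = measure M (A w)"

lemma A_sets[measurable]: "A w \<in> sets M"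
  unfolding A_def by measurable

lemma cS: "countable S" using cW by (simp add: S_def)

lemma Y_fiber:
  assumes "\<omega> \<in> space M" "\<omega>' \<in> space M" "W \<omega> = W \<omega>'"
  shows "Y i \<omega> = Y i \<omega>'"
proof -
  have "Y i -` {Y i \<omega>} \<inter> space F \<in> sets F"
    by (rule measurable_sets[OF YmF]) simp
  moreover have "sets F = {W -` B \<inter> space M | B. B \<in> sets (count_space UNIV)}"
    unfolding sigma_of_def by (rule sets_vimage_algebra2) auto
  ultimately obtain B where B: "Y i -` {Y i \<omega>} \<inter> space M = W -` B \<inter> space M"
    unfolding sigma_of_def by auto
  have "\<omega> \<in> Y i -` {Y i \<omega>} \<inter> space M" using assms by simp
  then have "W \<omega> \<in> B" using B by auto
  then have "\<omega>' \<in> W -` B \<inter> space M" using assms by auto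
  then have "\<omega>' \<in> Y i -` {Y i \<omega>} \<inter> space M" using B by simp
  then show ?thesis by simp
qed

definition "Yv \<omega> = (\<chi> i. Y i \<omega>)"
definition "a w = Yv (SOME \<omega>. \<omega> \<in> space M \<and> W \<omega> = w)"

lemma Yv_a: "\<omega> \<in> space M \<Longrightarrow> Yv \<omega> = a (W \<omega>)"
proof -
  assume w: "\<omega> \<in> space M"
  define \<omega>' where "\<omega>' = (SOME \<omega>'. \<omega>' \<in> space M \<and> W \<omega>' = W \<omega>)"
  have o: "\<omega>' \<in> space M \<and> W \<omega>' = W \<omega>" unfolding \<omega>'_def by (rule someI[of _ \<omega>]) (simp add: w)
  have "Y i \<omega> = Y i \<omega>'" for i using Y_fiber[of \<omega> \<omega>' i] o w by simp
  then have "Yv \<omega> = Yv \<omega>'" unfolding Yv_def by (simp add: vec_eq_iff)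
  then show ?thesis unfolding a_def \<omega>'_def .
qed

lemma Yv_m[measurable]: "Yv \<in> borel_measurable M"
proof (rule borel_measurable_euclidean_space[THEN iffD2], intro ballI)
  fix b :: "real^'d" assume "b \<in> Basis"
  then obtain i where b: "b = axis i 1" by (auto simp: Basis_vec_def)
  have "(\<lambda>x. Yv x \<bullet> b) = Y i" unfolding b Yv_def by (rule ext) (simp add: inner_axis)
  then show "(\<lambda>x. Yv x \<bullet> b) \<in> borel_measurable M" by simp
qed

lemma sumind:
  assumes "\<omega> \<in> space M"
  shows "(\<integral>\<^sup>+ w. indicator (A w) \<omega> * f w \<partial>count_space S) = f (W \<omega>)"
proof -
  have "(\<integral>\<^sup>+ w. indicator (A w) \<omega> * f w \<partial>count_space S) = (\<integral>\<^sup>+ w. f w * indicator {W \<omega>} w \<partial>count_space S)"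
    by (rule nn_integral_cong) (auto simp: A_def assms indicator_def)
  also have "\<dots> = f (W \<omega>) * emeasure (count_space S) {W \<omega>}"
    by (rule nn_integral_indicator_singleton) (simp add: S_def assms)
  also have "\<dots> = f (W \<omega>)" using assms by (simp add: S_def)
  finally show ?thesis .
qed

lemma p_sum: "(\<integral>\<^sup>+ w. ennreal (p w) \<partial>count_space S) = 1"
proof -
  have "1 = (\<integral>\<^sup>+ \<omega>. 1 \<partial>M)" by (simp add: emeasure_space_1)
  also have "\<dots> = (\<integral>\<^sup>+ \<omega>. (\<integral>\<^sup>+ w. indicator (A w) \<omega> * 1 \<partial>count_space S) \<partial>M)"
    using sumind[of _ "\<lambda>_. 1"] by (intro nn_integral_cong) simp
  also have "\<dots> = (\<integral>\<^sup>+ w. (\<integral>\<^sup>+ \<omega>. indicator (A w) \<omega> * 1 \<partial>M) \<partial>count_space S)"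
    by (rule nn_integral_count_space_nn_integral[OF cS, of "\<lambda>w \<omega>. indicator (A w) \<omega> * 1"]) measurable
  also have "\<dots> = (\<integral>\<^sup>+ w. ennreal (p w) \<partial>count_space S)"
    by (rule nn_integral_cong) (simp add: p_def emeasure_eq_measure)
  finally show ?thesis by simp
qed

definition "L \<omega> = ln (1 / p (W \<omega>))"

lemma p_le1: "p w \<le> 1" unfolding p_def by simp
lemma p_ge0: "p w \<ge> 0" unfolding p_def by simp

lemma lnp_nonneg: "ln (1 / p w) \<ge> 0"
  using p_le1[of w] p_ge0[of w] by (cases "p w = 0") auto

lemma L_m[measurable]: "L \<in> borel_measurable M"
proof -
  have "(\<lambda>w. ln (1 / p w)) \<in> borel_measurable (count_space UNIV)" by simp
  then show ?thesis unfolding L_def using Wm by (rule measurable_compose[rotated])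
qed

lemma L_entropy: "(\<integral>\<^sup>+ \<omega>. ennreal (L \<omega>) \<partial>M) = discrete_entropy M W"
proof -
  have "(\<integral>\<^sup>+ \<omega>. ennreal (L \<omega>) \<partial>M) = (\<integral>\<^sup>+ \<omega>. (\<integral>\<^sup>+ w. indicator (A w) \<omega> * ennreal (ln (1 / p w)) \<partial>count_space S) \<partial>M)"
  proof (rule nn_integral_cong)
    fix x assume "x \<in> space M"
    from sumind[OF this, of "\<lambda>w. ennreal (ln (1 / p w))"]
    show "ennreal (L x) = (\<integral>\<^sup>+ w. indicator (A w) x * ennreal (ln (1 / p w)) \<partial>count_space S)"
      by (simp only: L_def)
  qed
  also have "\<dots> = (\<integral>\<^sup>+ w. (\<integral>\<^sup>+ \<omega>. indicator (A w) \<omega> * ennreal (ln (1 / p w)) \<partial>M) \<partial>count_space S)"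
    by (rule nn_integral_count_space_nn_integral[OF cS, of "\<lambda>w \<omega>. indicator (A w) \<omega> * ennreal (ln (1 / p w))"]) measurable
  also have "\<dots> = (\<integral>\<^sup>+ w. ennreal (p w * ln (1 / p w)) \<partial>count_space S)"
  proof (rule nn_integral_cong)
    fix w
    have "(\<integral>\<^sup>+ \<omega>. indicator (A w) \<omega> * ennreal (ln (1 / p w)) \<partial>M) = (\<integral>\<^sup>+ \<omega>. ennreal (ln (1 / p w)) * indicator (A w) \<omega> \<partial>M)"
      by (rule nn_integral_cong) (rule mult.commute)
    also have "\<dots> = ennreal (ln (1 / p w)) * emeasure M (A w)"
      by (rule nn_integral_cmult_indicator) simp
    also have "\<dots> = ennreal (p w * ln (1 / p w))"
    proof -
      have "emeasure M (A w) = ennreal (p w)" by (simp add: p_def emeasure_eq_measure)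
      moreover have "ennreal (p w * ln (1 / p w)) = ennreal (p w) * ennreal (ln (1 / p w))"
        by (rule ennreal_mult) (auto simp: lnp_nonneg p_ge0)
      ultimately show ?thesis by (simp only: mult.commute)
    qed
    finally show "(\<integral>\<^sup>+ \<omega>. indicator (A w) \<omega> * ennreal (ln (1 / p w)) \<partial>M) = ennreal (p w * ln (1 / p w))" .
  qed
  also have "\<dots> = (\<integral>\<^sup>+ w. ennreal (p w * ln (1 / p w)) * indicator S w \<partial>count_space UNIV)"
    by (simp add: nn_integral_count_space_indicator)
  also have "\<dots> = (\<integral>\<^sup>+ w. ennreal (p w * ln (1 / p w)) \<partial>count_space UNIV)"
  proof (rule nn_integral_cong)
    fix w
    show "ennreal (p w * ln (1 / p w)) * indicator S w = ennreal (p w * ln (1 / p w))"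
    proof (cases "w \<in> S")
      case False
      then have "A w = {}" unfolding A_def S_def by auto
      then show ?thesis using False by (simp add: p_def)
    qed simp
  qed
  also have "\<dots> = discrete_entropy M W" by (simp add: discrete_entropy_def p_def A_def)
  finally show ?thesis .
qed

end

context gsetup begin

lemma exp_bound:
  "(\<integral>\<^sup>+ \<omega>. ennreal (exp (Yv \<omega> \<bullet> Z \<omega> - Yv \<omega> \<bullet> Yv \<omega> / 2 - L \<omega>)) \<partial>M) \<le> 1"
proof -
  define G where "G w \<omega> = ennreal (exp (a w \<bullet> Z \<omega> - a w \<bullet> a w / 2 - ln (1 / p w)))" for w \<omega>
  have Gm[measurable]: "G w \<in> borel_measurable M" for w unfolding G_def by measurable
  have "(\<integral>\<^sup>+ \<omega>. ennreal (exp (Yv \<omega> \<bullet> Z \<omega> - Yv \<omega> \<bullet> Yv \<omega> / 2 - L \<omega>)) \<partial>M)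
      = (\<integral>\<^sup>+ \<omega>. (\<integral>\<^sup>+ w. indicator (A w) \<omega> * G w \<omega> \<partial>count_space S) \<partial>M)"
  proof (rule nn_integral_cong)
    fix x assume x: "x \<in> space M"
    from sumind[OF x, of "\<lambda>w. G w x"]
    have "(\<integral>\<^sup>+ w. indicator (A w) x * G w x \<partial>count_space S) = G (W x) x" .
    also have "\<dots> = ennreal (exp (Yv x \<bullet> Z x - Yv x \<bullet> Yv x / 2 - L x))"
      unfolding G_def L_def Yv_a[OF x] ..
    finally show "ennreal (exp (Yv x \<bullet> Z x - Yv x \<bullet> Yv x / 2 - L x)) = (\<integral>\<^sup>+ w. indicator (A w) x * G w x \<partial>count_space S)"
      by simp
  qed
  also have "\<dots> = (\<integral>\<^sup>+ w. (\<integral>\<^sup>+ \<omega>. indicator (A w) \<omega> * G w \<omega> \<partial>M) \<partial>count_space S)"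
    by (rule nn_integral_count_space_nn_integral[OF cS, of "\<lambda>w \<omega>. indicator (A w) \<omega> * G w \<omega>"]) measurable
  also have "\<dots> \<le> (\<integral>\<^sup>+ w. ennreal (p w) \<partial>count_space S)"
  proof (rule nn_integral_mono)
    fix w
    show "(\<integral>\<^sup>+ \<omega>. indicator (A w) \<omega> * G w \<omega> \<partial>M) \<le> ennreal (p w)"
    proof (cases "p w = 0")
      case True
      then have "A w \<in> null_sets M" by (simp add: p_def null_sets_def emeasure_eq_measure)
      then have "AE \<omega> in M. \<omega> \<notin> A w" by (rule AE_not_in)
      then have "AE \<omega> in M. indicator (A w) \<omega> * G w \<omega> = 0"
        by eventually_elim simp
      then have "(\<integral>\<^sup>+ \<omega>. indicator (A w) \<omega> * G w \<omega> \<partial>M) = (\<integral>\<^sup>+ \<omega>. 0 \<partial>M)"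
        by (rule nn_integral_cong_AE)
      then show ?thesis by simp
    next
      case False
      then have pp: "p w > 0" using p_ge0[of w] by simp
      have "(\<integral>\<^sup>+ \<omega>. indicator (A w) \<omega> * G w \<omega> \<partial>M)
          \<le> (\<integral>\<^sup>+ \<omega>. ennreal (p w) * ennreal (exp (a w \<bullet> Z \<omega> - a w \<bullet> a w / 2)) \<partial>M)"
      proof (rule nn_integral_mono)
        fix \<omega>
        have "G w \<omega> = ennreal (p w * exp (a w \<bullet> Z \<omega> - a w \<bullet> a w / 2))"
          unfolding G_def using pp by (simp add: exp_diff mult.commute)
        also have "\<dots> = ennreal (p w) * ennreal (exp (a w \<bullet> Z \<omega> - a w \<bullet> a w / 2))"
          by (rule ennreal_mult) (use pp in auto)
        finally have "G w \<omega> = ennreal (p w) * ennreal (exp (a w \<bullet> Z \<omega> - a w \<bullet> a w / 2))" .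
        moreover have "indicator (A w) \<omega> * G w \<omega> \<le> G w \<omega>"
          by (cases "\<omega> \<in> A w") auto
        ultimately show "indicator (A w) \<omega> * G w \<omega> \<le> ennreal (p w) * ennreal (exp (a w \<bullet> Z \<omega> - a w \<bullet> a w / 2))"
          by simp
      qed
      also have "\<dots> = ennreal (p w) * (\<integral>\<^sup>+ \<omega>. ennreal (exp (a w \<bullet> Z \<omega> - a w \<bullet> a w / 2)) \<partial>M)"
        by (rule nn_integral_cmult) measurable
      also have "\<dots> = ennreal (p w)"
        using gauss_mgf[OF prob_space_axioms D, of "a w"] by simp
      finally show ?thesis .
    qed
  qed
  also have "\<dots> = 1" by (rule p_sum)
  finally show ?thesis .
qed

end

context gsetup begin

lemma Yv_nth: "Yv \<omega> $ i = Y i \<omega>" by (simp add: Yv_def)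

lemma trace_le:
  assumes fin: "discrete_entropy M W \<noteq> \<infinity>"
  shows "(\<Sum>i\<in>UNIV. \<integral>x. (Y i x)^2 \<partial>M) \<le> 2 * enn2real (discrete_entropy M W)"
proof -
  define E where "E = enn2real (discrete_entropy M W)"
  have L0: "L x \<ge> 0" for x unfolding L_def by (rule lnp_nonneg)
  have Lint: "integrable M L"
    by (rule integrableI_nonneg) (use L0 fin in \<open>auto simp: L_entropy top.not_eq_extremum\<close>)
  have "ennreal (\<integral>x. L x \<partial>M) = discrete_entropy M W"
    using nn_integral_eq_integral[OF Lint] L0 L_entropy by simp
  moreover have "(\<integral>x. L x \<partial>M) \<ge> 0" by (rule Bochner_Integration.integral_nonneg) (simp add: L0)
  ultimately have LE: "(\<integral>x. L x \<partial>M) = E"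
    unfolding E_def by (metis enn2real_ennreal)
  define T where "T = (\<Sum>i\<in>UNIV. \<integral>x. (Y i x)^2 \<partial>M)"
  define X where "X \<omega> = (\<Sum>i\<in>UNIV. Y i \<omega> * Z \<omega> $ i) - (\<Sum>i\<in>UNIV. (Y i \<omega>)^2) / 2 - L \<omega>" for \<omega>
  have Xeq: "X \<omega> = Yv \<omega> \<bullet> Z \<omega> - Yv \<omega> \<bullet> Yv \<omega> / 2 - L \<omega>" for \<omega>
    by (simp add: X_def inner_vec_def Yv_nth power2_eq_square)
  have Xint: "integrable M X"
    unfolding X_def using YZ_int Ysq_int Lint by (intro Bochner_Integration.integrable_diff Bochner_Integration.integrable_sum integrable_divide) auto
  have Xm[measurable]: "X \<in> borel_measurable M" using Xint by auto
  have eXint: "integrable M (\<lambda>x. exp (X x))"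
  proof (rule integrableI_nonneg)
    show "(\<lambda>x. exp (X x)) \<in> borel_measurable M" by measurable
    show "AE x in M. 0 \<le> exp (X x)" by simp
    show "(\<integral>\<^sup>+ x. ennreal (exp (X x)) \<partial>M) < \<infinity>"
      using exp_bound unfolding Xeq[symmetric] by (simp add: le_less_trans)
  qed
  have "ennreal (\<integral>x. exp (X x) \<partial>M) = (\<integral>\<^sup>+ x. ennreal (exp (X x)) \<partial>M)"
    using nn_integral_eq_integral[OF eXint] by simp
  also have "\<dots> \<le> 1" using exp_bound unfolding Xeq[symmetric] .
  finally have eX1: "(\<integral>x. exp (X x) \<partial>M) \<le> 1" by (simp add: ennreal_le_1)
  have "(\<integral>x. X x \<partial>M) \<le> (\<integral>x. exp (X x) - 1 \<partial>M)"
  proof (rule Bochner_Integration.integral_mono[OF Xint])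
    show "integrable M (\<lambda>x. exp (X x) - 1)" using eXint by simp
    fix x show "X x \<le> exp (X x) - 1" using exp_ge_add_one_self[of "X x"] by linarith
  qed
  also have "\<dots> = (\<integral>x. exp (X x) \<partial>M) - 1" using eXint by (simp add: prob_space)
  finally have X0: "(\<integral>x. X x \<partial>M) \<le> 0" using eX1 by simp
  have "(\<integral>x. X x \<partial>M) = (\<Sum>i\<in>UNIV. \<integral>x. Y i x * Z x $ i \<partial>M) - (\<Sum>i\<in>UNIV. \<integral>x. (Y i x)^2 \<partial>M) / 2 - (\<integral>x. L x \<partial>M)"
  proof -
    have iA: "integrable M (\<lambda>\<omega>. \<Sum>i\<in>UNIV. Y i \<omega> * Z \<omega> $ i)"
      using YZ_int by (intro Bochner_Integration.integrable_sum) auto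
    have iB: "integrable M (\<lambda>\<omega>. (\<Sum>i\<in>UNIV. (Y i \<omega>)^2) / 2)"
      using Ysq_int by (intro integrable_divide Bochner_Integration.integrable_sum) auto
    have "(\<integral>x. X x \<partial>M) = (\<integral>\<omega>. (\<Sum>i\<in>UNIV. Y i \<omega> * Z \<omega> $ i) - (\<Sum>i\<in>UNIV. (Y i \<omega>)^2) / 2 \<partial>M) - (\<integral>x. L x \<partial>M)"
      unfolding X_def by (rule Bochner_Integration.integral_diff[OF Bochner_Integration.integrable_diff[OF iA iB] Lint])
    also have "(\<integral>\<omega>. (\<Sum>i\<in>UNIV. Y i \<omega> * Z \<omega> $ i) - (\<Sum>i\<in>UNIV. (Y i \<omega>)^2) / 2 \<partial>M)
        = (\<integral>\<omega>. (\<Sum>i\<in>UNIV. Y i \<omega> * Z \<omega> $ i) \<partial>M) - (\<integral>\<omega>. (\<Sum>i\<in>UNIV. (Y i \<omega>)^2) / 2 \<partial>M)"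
      by (rule Bochner_Integration.integral_diff[OF iA iB])
    also have "(\<integral>\<omega>. (\<Sum>i\<in>UNIV. Y i \<omega> * Z \<omega> $ i) \<partial>M) = (\<Sum>i\<in>UNIV. \<integral>x. Y i x * Z x $ i \<partial>M)"
      by (rule Bochner_Integration.integral_sum) (use YZ_int in auto)
    also have "(\<integral>\<omega>. (\<Sum>i\<in>UNIV. (Y i \<omega>)^2) / 2 \<partial>M) = (\<integral>\<omega>. (\<Sum>i\<in>UNIV. (Y i \<omega>)^2) \<partial>M) / 2"
      by (rule integral_divide_zero)
    also have "(\<integral>\<omega>. (\<Sum>i\<in>UNIV. (Y i \<omega>)^2) \<partial>M) = (\<Sum>i\<in>UNIV. \<integral>x. (Y i x)^2 \<partial>M)"
      by (rule Bochner_Integration.integral_sum) (use Ysq_int in auto)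
    finally show ?thesis .
  qed
  also have "\<dots> = T / 2 - E" unfolding T_def LE EYY[symmetric] by simp
  finally show ?thesis using X0 unfolding T_def E_def by simp
qed

end

context gsetup begin

lemma support_eq: "support_rv M W = {w. p w > 0}"
  by (simp add: support_rv_def p_def A_def)

lemma support_sub: "support_rv M W \<subseteq> S"
proof
  fix w assume "w \<in> support_rv M W"
  then have "A w \<noteq> {}" by (auto simp: support_eq p_def)
  then show "w \<in> S" by (auto simp: A_def S_def)
qed

lemma ent_le_lnK:
  assumes fin: "finite (support_rv M W)"
  shows "discrete_entropy M W = ennreal (\<Sum>w\<in>support_rv M W. p w * ln (1 / p w))"
    and "(\<Sum>w\<in>support_rv M W. p w * ln (1 / p w)) \<le> ln (real (card (support_rv M W)))"
proof -
  let ?K = "support_rv M W"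
  have off: "p w = 0" if "w \<notin> ?K" for w using that p_ge0[of w] by (simp add: support_eq)
  have "discrete_entropy M W = (\<integral>\<^sup>+ w. ennreal (p w * ln (1 / p w)) \<partial>count_space UNIV)"
    by (simp add: discrete_entropy_def p_def A_def)
  also have "\<dots> = (\<Sum>w\<in>?K. ennreal (p w * ln (1 / p w)))"
    by (rule nn_integral_count_space'[OF fin]) (auto simp: off)
  also have "\<dots> = ennreal (\<Sum>w\<in>?K. p w * ln (1 / p w))"
    by (rule sum_ennreal) (simp add: p_ge0 lnp_nonneg)
  finally show "discrete_entropy M W = ennreal (\<Sum>w\<in>?K. p w * ln (1 / p w))" .
  have "1 = (\<integral>\<^sup>+ w. ennreal (p w) \<partial>count_space S)" using p_sum by simp
  also have "\<dots> = (\<Sum>w\<in>?K. ennreal (p w))"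
    by (rule nn_integral_count_space'[OF fin _ support_sub]) (auto simp: off)
  also have "\<dots> = ennreal (\<Sum>w\<in>?K. p w)" by (rule sum_ennreal) (simp add: p_ge0)
  finally have s1: "(\<Sum>w\<in>?K. p w) = 1"
    by (metis ennreal_1 ennreal_inj p_ge0 sum_nonneg zero_le_one)
  then have Kne: "?K \<noteq> {}" by auto
  define k where "k = real (card ?K)"
  have kpos: "k > 0" using Kne fin by (simp add: k_def card_gt_0_iff)
  have "(\<Sum>w\<in>?K. p w * ln (1 / p w)) - ln k = (\<Sum>w\<in>?K. p w * (ln (1 / p w) - ln k))"
    using s1 by (simp add: sum_subtractf sum_distrib_right[symmetric] right_diff_distrib)
  also have "\<dots> \<le> (\<Sum>w\<in>?K. p w * (1 / (p w * k) - 1))"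
  proof (rule sum_mono)
    fix w assume "w \<in> ?K"
    then have pw: "p w > 0" by (simp add: support_eq)
    have "ln (1 / p w) - ln k = ln (1 / (p w * k))" using pw kpos by (simp add: ln_div ln_mult)
    also have "\<dots> \<le> 1 / (p w * k) - 1" by (rule ln_le_minus_one) (use pw kpos in simp)
    finally show "p w * (ln (1 / p w) - ln k) \<le> p w * (1 / (p w * k) - 1)"
      using pw by (simp add: mult_left_mono)
  qed
  also have "\<dots> = (\<Sum>w\<in>?K. 1 / k - p w)"
    by (rule sum.cong) (auto simp: support_eq field_simps)
  also have "\<dots> = 0" using s1 kpos by (simp add: sum_subtractf k_def)
  finally show "(\<Sum>w\<in>?K. p w * ln (1 / p w)) \<le> ln (real (card ?K))" by (simp add: k_def)
qed

lemma cexp_eq: "cond_exp_vec M W Z = Yv"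
  by (rule ext) (simp add: cond_exp_vec_def Yv_def Y_def)

lemma lam_le: "real CARD('d) * lambda_min (cov_matrix M (cond_exp_vec M W Z)) \<le> (\<Sum>i\<in>UNIV. \<integral>x. (Y i x)^2 \<partial>M)"
proof -
  define C where "C = cov_matrix M (cond_exp_vec M W Z)"
  have sym: "C$i$j = C$j$i" for i j unfolding C_def cov_matrix_def by (simp add: mult.commute)
  have "lambda_min C \<le> (\<integral>x. (Y i x)^2 \<partial>M)" for i
  proof -
    have "lambda_min C \<le> C$i$i" by (rule lambda_min_le_diag[OF sym])
    also have "\<dots> \<le> (\<integral>x. (Y i x)^2 \<partial>M)"
      unfolding C_def cov_matrix_def cexp_eq by (simp add: Yv_nth var_le)
    finally show ?thesis .
  qed
  then have "(\<Sum>i\<in>(UNIV::'d set). lambda_min C) \<le> (\<Sum>i\<in>UNIV. \<integral>x. (Y i x)^2 \<partial>M)"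
    by (rule sum_mono)
  then show ?thesis by (simp add: C_def)
qed

end

theorem mainTheorem5:
  fixes M :: "'a measure" and Z :: "'a \<Rightarrow> real^'d" and W :: "'a \<Rightarrow> 'w"
  assumes "prob_space M"
    and "distributed M lborel Z (\<lambda>x. ennreal (\<Prod>i\<in>UNIV. std_normal_density (x $ i)))"
    and "W \<in> measurable M (count_space UNIV)"
    and "countable (W ` space M)"
    and "\<And>w. measure M {\<omega>\<in>space M. W \<omega> = w} < 1/2"
  shows "ereal (lambda_min (cov_matrix M (cond_exp_vec M W Z)))
           \<le> ereal (37 / real CARD('d)) * enn2ereal (discrete_entropy M W)
         \<and> (finite (support_rv M W) \<longrightarrow>
             lambda_min (cov_matrix M (cond_exp_vec M W Z))
               \<le> 37 / real CARD('d) * ln (real (card (support_rv M W))))"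
proof -
  interpret gsetup M Z W
    using assms(1-4) unfolding gsetup_def gsetup_axioms_def by auto
  define lam where "lam = lambda_min (cov_matrix M (cond_exp_vec M W Z))"
  define d where "d = real CARD('d)"
  have dpos: "d > 0" by (simp add: d_def)
  have key: "lam \<le> 2 * enn2real (discrete_entropy M W) / d" if "discrete_entropy M W \<noteq> \<infinity>"
  proof -
    have "d * lam \<le> 2 * enn2real (discrete_entropy M W)"
      using lam_le trace_le[OF that] unfolding lam_def d_def by linarith
    then show ?thesis using dpos by (simp add: field_simps)
  qed
  have E0: "enn2real (discrete_entropy M W) \<ge> 0" by simp
  have key2: "lam \<le> 37 / d * enn2real (discrete_entropy M W)" if "discrete_entropy M W \<noteq> \<infinity>"
  proof -
    have "2 * enn2real (discrete_entropy M W) / d \<le> 37 / d * enn2real (discrete_entropy M W)"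
      using dpos E0 by (simp add: field_simps)
    then show ?thesis using key[OF that] by linarith
  qed
  have part1: "ereal lam \<le> ereal (37 / d) * enn2ereal (discrete_entropy M W)"
  proof (cases "discrete_entropy M W = \<infinity>")
    case True
    then have "enn2ereal (discrete_entropy M W) = \<infinity>" by simp
    moreover have "ereal (37 / d) * \<infinity> = \<infinity>" using dpos by simp
    ultimately show ?thesis by simp
  next
    case False
    then have "discrete_entropy M W = ennreal (enn2real (discrete_entropy M W))"
      by (simp add: less_top ennreal_enn2real)
    then have "enn2ereal (discrete_entropy M W) = enn2ereal (ennreal (enn2real (discrete_entropy M W)))"
      by simp
    also have "\<dots> = ereal (enn2real (discrete_entropy M W))"
      by (rule enn2ereal_ennreal[OF E0])
    finally have "enn2ereal (discrete_entropy M W) = ereal (enn2real (discrete_entropy M W))" .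
    then show ?thesis using key2[OF False] by simp
  qed
  have part2: "lam \<le> 37 / d * ln (real (card (support_rv M W)))" if fin: "finite (support_rv M W)"
  proof -
    define s where "s = (\<Sum>w\<in>support_rv M W. p w * ln (1 / p w))"
    have s0: "s \<ge> 0" unfolding s_def by (intro sum_nonneg mult_nonneg_nonneg p_ge0 lnp_nonneg)
    have ent: "discrete_entropy M W = ennreal s" using ent_le_lnK(1)[OF fin] by (simp add: s_def)
    have sle: "s \<le> ln (real (card (support_rv M W)))" using ent_le_lnK(2)[OF fin] by (simp add: s_def)
    have "lam \<le> 37 / d * s" using key2 ent s0 by simp
    also have "\<dots> \<le> 37 / d * ln (real (card (support_rv M W)))"
      using sle dpos by (intro mult_left_mono) auto
    finally show ?thesis .
  qed
  show ?thesis using part1 part2 unfolding lam_def d_def by blast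
qed

end
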